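(* Let $q$ be a prime power with $q\equiv 3\pmod 4$ and $q>7$, and let $BP(q)$ be the bi-Paley graph. Then any two distinct vertices of the same colour are determined by their $\tfrac14(q-3)$ common neighbours: if $u,v$ and $u',v'$ are two pairs of distinct vertices of the same colour with the same set of common neighbours, then $\{u,v\}=\{u',v'\}$. Equivalently, there are no three distinct vertices of the same colour all adjacent to the common neighbours of two of them.
   Context: Let $\mathbb{F}$ be the field with $q$ elements. The bi-Paley graph $BP(q)$ is the bipartite graph on two copies $\mathbb{F}_\bullet$ and $\mathbb{F}_\circ$ of $\mathbb{F}$, in which $x_\bullet$ is adjacent to $y_\circ$ if and only if $y-x$ is a non-zero square in $\mathbb{F}$. Any two distinct vertices of the same colour in $BP(q)$ have exactly $\tfrac14(q-3)$ common neighbours. *)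

theory Defs
  imports Main
begin

definition nonzero_square :: "'a::field \<Rightarrow> bool" where
  "nonzero_square a \<longleftrightarrow> a \<noteq> 0 \<and> (\<exists>b. a = b ^ 2)"

text \<open>Vertices of BP(q): Inl x is the black copy x_bullet, Inr y the white copy y_circ.
  x_bullet ~ y_circ iff y - x is a non-zero square; the graph is bipartite (undirected).\<close>
fun bp_adj :: "'a::field + 'a \<Rightarrow> 'a + 'a \<Rightarrow> bool" where
  "bp_adj (Inl x) (Inr y) = nonzero_square (y - x)"
| "bp_adj (Inr y) (Inl x) = nonzero_square (y - x)"
| "bp_adj _ _ = False"

definition bp_colour :: "'a + 'a \<Rightarrow> bool" where
  "bp_colour v = isl v"

definition bp_common_nbrs :: "'a::field + 'a \<Rightarrow> 'a + 'a \<Rightarrow> ('a + 'a) set" where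
  "bp_common_nbrs u v = {w. bp_adj u w \<and> bp_adj v w}"

end

theory Submission imports Defs begin

abbreviation sq :: "'a::field \<Rightarrow> bool" where "sq \<equiv> nonzero_square"

lemma inv_even:
  assumes "finite A" "\<forall>x\<in>A. f x \<in> A \<and> f x \<noteq> x \<and> f (f x) = x"
  shows "even (card A)"
  using assms
proof (induction "card A" arbitrary: A rule: less_induct)
  case less
  show ?case
  proof (cases "A = {}")
    case True thus ?thesis by simp
  next
    case False
    then obtain x where x: "x \<in> A" by blast
    have fx: "f x \<in> A" "f x \<noteq> x" using less.prems x by auto
    let ?B = "A - {x, f x}"
    have c2: "card {x, f x} = 2" using fx by simp
    have cB: "card ?B = card A - 2" using x fx less.prems(1) c2
      by (subst card_Diff_subset) auto
    have cA: "card A \<ge> 2" using x fx less.prems(1) c2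
      by (metis card_mono empty_subsetI insert_subset)
    have "even (card ?B)"
    proof (rule less.hyps)
      show "card ?B < card A" using cB cA by simp
      show "finite ?B" using less.prems by simp
      show "\<forall>y\<in>?B. f y \<in> ?B \<and> f y \<noteq> y \<and> f (f y) = y"
        using less.prems(2) x by (metis Diff_iff insertCI insertE singletonD)
    qed
    thus ?thesis using cB cA by (simp add: dvd_diff_nat)
  qed
qed

lemma sq_mult: "sq a \<Longrightarrow> sq b \<Longrightarrow> sq (a*b)"
  unfolding nonzero_square_def by (metis mult_eq_0_iff power_mult_distrib)

lemma sq_cancel: "sq a \<Longrightarrow> sq (a*b) \<Longrightarrow> sq b"
proof -
  assume a: "sq a" and ab: "sq (a*b)"
  obtain c where c: "a = c^2" "a \<noteq> 0" using a unfolding nonzero_square_def by blast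
  obtain d where d: "a*b = d^2" "a*b\<noteq>0" using ab unfolding nonzero_square_def by blast
  have "b = (d/c)^2" using c d by (simp add: power_divide field_simps)
  thus ?thesis using d unfolding nonzero_square_def by auto
qed

lemma sq_inverse: "sq a \<Longrightarrow> sq (inverse a)"
  unfolding nonzero_square_def by (metis inverse_nonzero_iff_nonzero power_inverse)

lemma sq_nz: "sq a \<Longrightarrow> a \<noteq> 0" unfolding nonzero_square_def by auto

lemma sq_one: "sq (1::'a::field)" unfolding nonzero_square_def by (auto intro: exI[of _ 1])

lemma sq_sqr: "a \<noteq> 0 \<Longrightarrow> sq (a^2)" unfolding nonzero_square_def by auto

lemma arith4: "even (c::nat) \<Longrightarrow> 2*c+1 = Q \<Longrightarrow> Q mod 4 = 3 \<Longrightarrow> False" by presburger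

definition chi :: "'a::field \<Rightarrow> int" where
  "chi x = (if x = 0 then 0 else if sq x then 1 else -1)"

definition Nb :: "'a::field \<Rightarrow> 'a \<Rightarrow> 'a set" where
  "Nb x y = {z. sq (z - x) \<and> sq (z - y)}"

lemma sq_scale: "sq d \<Longrightarrow> sq (d * e) \<longleftrightarrow> sq e"
  using sq_mult sq_cancel by blast

lemma chi_sq: "sq x \<longleftrightarrow> chi x = 1"
  unfolding chi_def using sq_nz by auto

lemma chi_vals: "x \<noteq> 0 \<Longrightarrow> chi x = 1 \<or> chi x = -1"
  unfolding chi_def by auto

lemma chi_0: "chi 0 = 0" unfolding chi_def by simp

lemma Nb_sym: "Nb x y = Nb y x" unfolding Nb_def by auto

lemma Nb_img: assumes "sq (y - x)" shows "Nb x y = (\<lambda>z. x + (y-x)*z) ` Nb 0 1"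
proof -
  let ?d = "y - x"
  have d0: "?d \<noteq> 0" using sq_nz[OF assms] .
  show ?thesis
  proof (rule set_eqI, rule iffI)
    fix z' assume "z' \<in> Nb x y"
    hence h: "sq (z' - x)" "sq (z' - y)" unfolding Nb_def by auto
    let ?z = "(z' - x) / ?d"
    have e1: "z' - x = ?d * ?z" using d0 by simp
    have e2: "z' - y = ?d * (?z - 1)" using d0 by (simp add: field_simps)
    have "?z \<in> Nb 0 1" unfolding Nb_def using h e1 e2 sq_scale[OF assms] by (metis (no_types, lifting) diff_zero mem_Collect_eq)
    moreover have "z' = x + ?d * ?z" using e1 by (simp add: algebra_simps)
    ultimately show "z' \<in> (\<lambda>z. x + (y-x)*z) ` Nb 0 1" by blast
  next
    fix z' assume "z' \<in> (\<lambda>z. x + (y-x)*z) ` Nb 0 1"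
    then obtain z where z: "z \<in> Nb 0 1" "z' = x + ?d * z" by blast
    have "sq z" "sq (z - 1)" using z(1) unfolding Nb_def by auto
    moreover have "z' - x = ?d * z" "z' - y = ?d * (z - 1)" using z(2) by (simp_all add: algebra_simps)
    ultimately show "z' \<in> Nb x y" unfolding Nb_def using sq_scale[OF assms] by simp
  qed
qed

context
  assumes q3: "card (UNIV :: 'a::{finite,field} set) mod 4 = 3"
begin

lemma two_nz: "(2::'a) \<noteq> 0"
proof
  assume h: "(2::'a) = 0"
  have "even (card (UNIV::'a set))"
  proof (rule inv_even[where f="\<lambda>x. x + 1"])
    show "finite (UNIV::'a set)" by simp
    have "\<And>x::'a. x + 1 + 1 = x" using h by (metis add.assoc add_0_right one_add_one)
    thus "\<forall>x\<in>(UNIV::'a set). x + 1 \<in> UNIV \<and> x + 1 \<noteq> x \<and> x + 1 + 1 = x" by simp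
  qed
  thus False using q3 by presburger
qed

lemma neg_ne: "(x::'a) \<noteq> 0 \<Longrightarrow> -x \<noteq> x"
proof
  assume "x \<noteq> 0" "-x = x"
  hence "2 * x = 0" by (metis mult_2 neg_eq_iff_add_eq_0)
  thus False using two_nz \<open>x \<noteq> 0\<close> by simp
qed

lemma card_S: "2 * card {x::'a. sq x} + 1 = card (UNIV::'a set)"
proof -
  let ?S = "{x::'a. sq x}"
  let ?R = "\<lambda>s::'a. {r. r^2 = s}"
  have U: "UNIV - {0} = (\<Union>s\<in>?S. ?R s)"
    by (auto simp: nonzero_square_def)
  have fib: "card (?R s) = 2" if hs: "s \<in> ?S" for s
  proof -
    obtain b where b: "s = b^2" "b \<noteq> 0" using hs unfolding nonzero_square_def by fastforce
    have "?R s = {b, -b}" using b by (auto simp: power2_eq_iff)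
    thus ?thesis using neg_ne[OF b(2)] by auto
  qed
  have "card (UNIV - {0::'a}) = (\<Sum>s\<in>?S. card (?R s))"
    unfolding U by (rule card_UN_disjoint) auto
  also have "\<dots> = 2 * card ?S" using fib by simp
  finally have "card (UNIV - {0::'a}) = 2 * card ?S" .
  moreover have "card (UNIV - {0::'a}) = card (UNIV::'a set) - 1" by (simp add: card_Diff_subset)
  moreover have "card (UNIV::'a set) \<ge> 1" using q3 by (metis card.empty mod_0 not_less_eq_eq zero_neq_numeral le_simps(1) less_one not_le)
  ultimately show ?thesis by linarith
qed

lemma neg1_not_sq: "\<not> sq (-1::'a)"
proof
  assume h: "sq (-1::'a)"
  have "even (card {x::'a. sq x})"
  proof (rule inv_even[where f=uminus])
    show "finite {x::'a. sq x}" by simp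
    show "\<forall>x\<in>{x::'a. sq x}. - x \<in> {x. sq x} \<and> - x \<noteq> x \<and> - (- x) = x"
      using h neg_ne sq_mult[OF h] sq_nz by fastforce
  qed
  thus False using card_S q3 arith4 by metis
qed

lemma sq_or_neg: assumes "(x::'a) \<noteq> 0" shows "sq x \<or> sq (-x)"
proof -
  let ?S = "{x::'a. sq x}"
  have disj: "?S \<inter> uminus ` ?S = {}"
  proof -
    have "False" if y: "sq y" "sq (-y)" for y :: 'a
    proof -
      have "sq (-y * inverse y)" using sq_mult[OF y(2) sq_inverse[OF y(1)]] .
      moreover have "-y * inverse y = -1" using sq_nz[OF y(1)] by simp
      ultimately show False using neg1_not_sq by simp
    qed
    thus ?thesis by auto
  qed
  have ci: "card (uminus ` ?S) = card ?S" by (rule card_image) (simp add: inj_on_def)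
  have sub: "?S \<union> uminus ` ?S \<subseteq> UNIV - {0}" using sq_nz by auto
  have "card (?S \<union> uminus ` ?S) = card (UNIV - {0::'a})"
  proof -
    have "card (?S \<union> uminus ` ?S) = 2 * card ?S" using card_Un_disjoint[OF _ _ disj] ci by simp
    moreover have "card (UNIV - {0::'a}) = card (UNIV::'a set) - 1" by (simp add: card_Diff_subset)
    ultimately show ?thesis using card_S by simp
  qed
  hence "?S \<union> uminus ` ?S = UNIV - {0}" using card_subset_eq[OF _ sub] by simp
  hence "x \<in> ?S \<union> uminus ` ?S" using assms by blast
  thus ?thesis by auto
qed

lemma chi_mult: "chi (x*y) = chi x * chi (y::'a)"
proof (cases "x = 0 \<or> y = 0")
  case True thus ?thesis unfolding chi_def by auto
next
  case False
  hence nz: "x \<noteq> 0" "y \<noteq> 0" "x*y \<noteq> 0" by auto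
  have "sq (x*y) \<longleftrightarrow> (sq x \<longleftrightarrow> sq y)"
  proof (cases "sq x")
    case True thus ?thesis using sq_scale by blast
  next
    case nx: False
    hence snx: "sq (-x)" using sq_or_neg nz by blast
    show ?thesis
    proof (cases "sq y")
      case True thus ?thesis using nx sq_scale[OF True, of x] by (simp add: mult.commute)
    next
      case False
      hence "sq (-y)" using sq_or_neg nz by blast
      hence "sq ((-x)*(-y))" using sq_mult snx by blast
      thus ?thesis using nx False by simp
    qed
  qed
  thus ?thesis unfolding chi_def using nz by auto
qed

lemma chi_neg1: "chi (-1::'a) = -1"
  unfolding chi_def using neg1_not_sq by simp

lemma chi_inv: "chi (inverse x) = chi (x::'a)"
proof -
  have "sq (inverse x) \<longleftrightarrow> sq x" using sq_inverse[of x] sq_inverse[of "inverse x"] by auto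
  thus ?thesis unfolding chi_def by simp
qed

lemma card_A: "2 * card (Nb 0 (1::'a)) + 1 = card {x::'a. sq x}"
proof -
  let ?A = "Nb 0 (1::'a)"
  let ?B = "{z::'a. sq z \<and> z \<noteq> 1 \<and> \<not> sq (z - 1)}"
  have A: "?A = {z. sq z \<and> sq (z - 1)}" unfolding Nb_def by simp
  have bij: "bij_betw inverse ?A ?B"
  proof (rule bij_betw_imageI)
    show "inj_on inverse ?A" by (simp add: inj_on_def)
    show "inverse ` ?A = ?B"
    proof (rule set_eqI, rule iffI)
      fix u assume "u \<in> inverse ` ?A"
      then obtain z where z: "sq z" "sq (z - 1)" "u = inverse z" using A by auto
      have z0: "z \<noteq> 0" "z \<noteq> 1" using sq_nz[OF z(1)] sq_nz[OF z(2)] by auto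
      have "inverse z - 1 = (-1) * (z - 1) * inverse z" using z0 by (simp add: field_simps)
      hence "chi (inverse z - 1) = chi (-1::'a) * chi (z - 1) * chi (inverse z)" by (simp only: chi_mult)
      moreover have "chi z = 1" "chi (z - 1) = 1" using z chi_sq by auto
      ultimately have "chi (inverse z - 1) = -1" using chi_neg1 chi_inv by simp
      hence "\<not> sq (inverse z - 1)" using chi_sq[of "inverse z - 1"] by simp
      moreover have "inverse z \<noteq> 1" using z0 by (metis inverse_1 inverse_inverse_eq)
      ultimately show "u \<in> ?B" using z sq_inverse by simp
    next
      fix u assume u: "u \<in> ?B"
      hence u': "sq u" "u \<noteq> 1" "\<not> sq (u - 1)" by auto
      have u0: "u \<noteq> 0" using sq_nz[OF u'(1)] .
      have u10: "u - 1 \<noteq> 0" using u'(2) by simp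
      have c1: "chi (u - 1) = -1" unfolding chi_def using u10 u'(3) by simp
      have "inverse u - 1 = (-1) * (u - 1) * inverse u" using u0 by (simp add: field_simps)
      hence "chi (inverse u - 1) = chi (-1::'a) * chi (u - 1) * chi (inverse u)" by (simp only: chi_mult)
      moreover have "chi u = 1" using u'(1) chi_sq by blast
      ultimately have "chi (inverse u - 1) = 1" using c1 chi_neg1 chi_inv by simp
      hence "sq (inverse u - 1)" using chi_sq by blast
      hence "inverse u \<in> ?A" unfolding A using sq_inverse[OF u'(1)] by simp
      moreover have "u = inverse (inverse u)" by simp
      ultimately show "u \<in> inverse ` ?A" by blast
    qed
  qed
  have cAB: "card ?A = card ?B" using bij_betw_same_card[OF bij] .
  have S: "{x::'a. sq x} = (?A \<union> ?B) \<union> {1}" using A sq_one by auto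
  have "card {x::'a. sq x} = card (?A \<union> ?B) + card {1::'a}"
    unfolding S by (rule card_Un_disjoint) (auto simp: A nonzero_square_def)
  also have "card (?A \<union> ?B) = card ?A + card ?B"
    by (rule card_Un_disjoint) (auto simp: A)
  finally show ?thesis using cAB by simp
qed

lemma Nb_card: assumes "x \<noteq> (y::'a)" shows "card (Nb x y) = card (Nb 0 (1::'a))"
proof -
  have "card (Nb x y) = card (Nb 0 (1::'a))" if h: "sq (y - x)" for x y :: 'a
  proof -
    have "inj_on (\<lambda>z. x + (y-x)*z) (Nb 0 1)" using sq_nz[OF h] by (auto simp: inj_on_def)
    thus ?thesis unfolding Nb_img[OF h] by (rule card_image)
  qed
  moreover have "sq (y - x) \<or> sq (x - y)" using sq_or_neg[of "y - x"] assms by simp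
  ultimately show ?thesis using Nb_sym by metis
qed

end

context
  assumes q3: "card (UNIV :: 'a::{finite,field} set) mod 4 = 3"
    and q7: "card (UNIV :: 'a set) > 7"
begin

lemma T0:
  assumes w0: "(w::'a) \<noteq> 0" and w1: "w \<noteq> 1" and sub: "Nb 0 1 \<subseteq> {z. sq (z - w)}"
  shows False
proof -
  let ?A = "Nb 0 (1::'a)"
  let ?X = "{z::'a. sq z}"
  let ?Y = "{z::'a. sq (z - 1)}"
  let ?Z = "{z::'a. sq (z - w)}"
  define q where "q = card (UNIV::'a set)"
  define m where "m = card ?X"
  define t where "t = card ?A"
  have cX: "2*m + 1 = q" unfolding m_def q_def using card_S[OF q3] .
  have cA: "2*t + 1 = m" unfolding m_def t_def using card_A[OF q3] .
  have m5: "m \<ge> 5" using cX q3 q7 unfolding q_def by presburger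
  have XY: "?X \<inter> ?Y = ?A" unfolding Nb_def by auto
  have h1: "Nb 0 w = ?A"
  proof -
    have s: "?A \<subseteq> Nb 0 w" using sub unfolding Nb_def by auto
    have "card ?A = card (Nb 0 w)" using Nb_card[OF q3, of 0 w] w0 by simp
    thus ?thesis using card_subset_eq[OF _ s] by simp
  qed
  have h2: "Nb 1 w = ?A"
  proof -
    have s: "?A \<subseteq> Nb 1 w" using sub unfolding Nb_def by auto
    have "card ?A = card (Nb 1 w)" using Nb_card[OF q3, of 1 w] w1 by simp
    thus ?thesis using card_subset_eq[OF _ s] by simp
  qed
  have XZ: "?X \<inter> ?Z = ?A" using h1 unfolding Nb_def by auto
  have YZ: "?Y \<inter> ?Z = ?A" using h2 unfolding Nb_def by auto
  have cY: "card ?Y = m"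
  proof -
    have "?Y = (\<lambda>z. z + 1) ` ?X" by (auto simp: image_iff) (metis diff_add_cancel)
    moreover have "inj_on (\<lambda>z::'a. z + 1) ?X" by (simp add: inj_on_def)
    ultimately show ?thesis unfolding m_def by (simp add: card_image)
  qed
  have cZ: "card ?Z = m"
  proof -
    have "?Z = (\<lambda>z. z + w) ` ?X" by (auto simp: image_iff) (metis diff_add_cancel)
    moreover have "inj_on (\<lambda>z::'a. z + w) ?X" by (simp add: inj_on_def)
    ultimately show ?thesis unfolding m_def by (simp add: card_image)
  qed
  have u1: "card (?X \<union> ?Y) + t = 2*m"
    using card_Un_Int[of ?X ?Y] XY cY unfolding t_def m_def by simp
  have XYZ: "(?X \<union> ?Y) \<inter> ?Z = ?A" using XZ YZ by auto
  have u2: "card (?X \<union> ?Y \<union> ?Z) + t = card (?X \<union> ?Y) + m"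
    using card_Un_Int[of "?X \<union> ?Y" ?Z] XYZ cZ unfolding t_def by simp
  have "card (?X \<union> ?Y \<union> ?Z) = q" using u1 u2 cA cX by linarith
  hence U: "?X \<union> ?Y \<union> ?Z = UNIV" by (intro card_eq_UNIV_imp_eq_UNIV) (simp_all add: q_def)
  have cover: "sq z \<or> sq (z - 1) \<or> sq (z - w)" for z using U by blast
  have t1: "sq z \<Longrightarrow> sq (z - 1) \<Longrightarrow> sq (z - w)" for z using sub unfolding Nb_def by auto
  have t2: "sq z \<Longrightarrow> sq (z - w) \<Longrightarrow> sq (z - 1)" for z using XZ XY by blast
  have t3: "sq (z - 1) \<Longrightarrow> sq (z - w) \<Longrightarrow> sq z" for z using YZ XY by blast
  have Podd: "chi z * chi (z - 1) * chi (z - w) = 1" if "z \<noteq> 0" "z \<noteq> 1" "z \<noteq> w" for z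
  proof -
    have nz: "z \<noteq> 0" "z - 1 \<noteq> 0" "z - w \<noteq> 0" using that by auto
    show ?thesis using cover[of z] t1[of z] t2[of z] t3[of z] nz unfolding chi_def by auto
  qed
  have mw: "sq (-w)" using cover[of 0] neg1_not_sq[OF q3] sq_nz[of 0] by auto
  define w' where "w' = inverse w"
  have key: "chi (z - w) * chi (z - w') = -1" if z: "z \<noteq> 0" "z \<noteq> 1" "z \<noteq> w" "z \<noteq> w'" for z
  proof -
    define iz where "iz = inverse z"
    have iz: "iz \<noteq> 0" "iz \<noteq> 1" "iz \<noteq> w"
      using z(1) apply (simp add: iz_def)
      using z(2) apply (metis iz_def inverse_1 inverse_inverse_eq)
      using z(4) by (metis iz_def w'_def inverse_inverse_eq)
    have e1: "chi z * chi (z - 1) * chi (z - w) = 1" using Podd z by blast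
    have e2: "chi iz * chi (iz - 1) * chi (iz - w) = 1" using Podd iz by blast
    have eq1: "iz - 1 = (-1) * (z - 1) * iz" using z unfolding iz_def by (simp add: field_simps)
    have eq2: "iz - w = (-w) * (z - w') * iz" using z w0 unfolding iz_def w'_def by (simp add: field_simps)
    have c1: "chi (iz - 1) = chi (-1::'a) * chi (z - 1) * chi iz" unfolding eq1 by (simp only: chi_mult[OF q3])
    have c2: "chi (iz - w) = chi (-w) * chi (z - w') * chi iz" unfolding eq2 by (simp only: chi_mult[OF q3])
    have ci: "chi iz = chi z" unfolding iz_def by (rule chi_inv[OF q3])
    have cmw: "chi (-w) = 1" using mw chi_sq by blast
    have cm1: "chi (-1::'a) = -1" by (rule chi_neg1[OF q3])
    have v: "chi z = 1 \<or> chi z = -1" "chi (z-1) = 1 \<or> chi (z-1) = -1"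
      "chi (z-w) = 1 \<or> chi (z-w) = -1" "chi (z-w') = 1 \<or> chi (z-w') = -1"
      using chi_vals[of z] chi_vals[of "z-1"] chi_vals[of "z-w"] chi_vals[of "z-w'"] z by auto
    show ?thesis using e1 e2 c1 c2 ci cmw cm1 v by auto
  qed
  obtain z where z: "z \<noteq> 0" "z \<noteq> 1" "z \<noteq> w" "z \<noteq> w'" "sq ((z - w) * (z - w'))"
  proof (cases "w = w'")
    case True
    have "card {0, 1, w} \<le> 3" by (auto simp: card_insert_if)
    hence "{0,1,w} \<noteq> (UNIV::'a set)" using q7 by auto
    then obtain z where "z \<notin> {0,1,w}" by blast
    moreover have "sq ((z - w) * (z - w))" using sq_sqr[of "z - w"] calculation by (simp add: power2_eq_square)
    ultimately show ?thesis using that True by auto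
  next
    case False
    define zr where "zr r = (w - r*w') / (1 - r)" for r
    let ?R = "?X - {1}"
    have zr1: "zr r - w' = (w - w') / (1 - r)" if "r \<noteq> 1" for r
      using that unfolding zr_def by (simp add: field_simps)
    have zr2: "zr r - w = r * ((w - w') / (1 - r))" if "r \<noteq> 1" for r
      using that unfolding zr_def by (simp add: field_simps)
    have inj: "inj_on zr ?R"
    proof (rule inj_onI)
      fix r s assume r: "r \<in> ?R" and s: "s \<in> ?R" and e: "zr r = zr s"
      have "(w - w') / (1 - r) = (w - w') / (1 - s)" using zr1[of r] zr1[of s] r s e by auto
      hence "1 - r = 1 - s" using False r s by (auto simp: field_simps)
      thus "r = s" by simp
    qed
    have "card (zr ` ?R) = m - 1" using card_image[OF inj] unfolding m_def by (simp add: sq_one)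
    moreover have "card {0::'a, 1} \<le> 2" by (auto simp: card_insert_if)
    ultimately have "\<not> zr ` ?R \<subseteq> {0, 1}" using m5 card_mono[of "{0,1}" "zr ` ?R"] by auto
    then obtain r where r: "r \<in> ?R" "zr r \<notin> {0,1}" by blast
    have r0: "r \<noteq> 0" "r \<noteq> 1" "sq r" using r sq_nz[of r] by auto
    have d0: "w - w' \<noteq> 0" "1 - r \<noteq> 0" using False r0 by auto
    have "zr r - w \<noteq> 0" "zr r - w' \<noteq> 0" using zr1[OF r0(2)] zr2[OF r0(2)] d0 r0 by auto
    moreover have "sq ((zr r - w) * (zr r - w'))"
    proof -
      have "(zr r - w) * (zr r - w') = r * ((w - w') / (1 - r))^2"
        using zr1[OF r0(2)] zr2[OF r0(2)] by (simp add: power2_eq_square)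
      thus ?thesis using sq_mult[OF r0(3) sq_sqr] d0 by simp
    qed
    ultimately show ?thesis using that r by auto
  qed
  have "chi ((z - w) * (z - w')) = 1" using z(5) chi_sq by blast
  moreover have "chi ((z - w) * (z - w')) = chi (z - w) * chi (z - w')" by (rule chi_mult[OF q3])
  ultimately show False using key[OF z(1-4)] by simp
qed

lemma T:
  assumes xy: "(x::'a) \<noteq> y" and wx: "w \<noteq> x" and wy: "w \<noteq> y" and sub: "Nb x y \<subseteq> {z. sq (z - w)}"
  shows False
proof -
  have gen: False if h: "sq (y - x)" "w \<noteq> x" "w \<noteq> y" "Nb x y \<subseteq> {z. sq (z - w)}" for x y :: 'a
  proof -
    define d where "d = y - x"
    have d0: "d \<noteq> 0" using sq_nz[OF h(1)] d_def by simp
    define w0 where "w0 = (w - x) / d"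
    have w00: "w0 \<noteq> 0" using h(2) d0 unfolding w0_def by simp
    have w01: "w0 \<noteq> 1" using h(3) d0 unfolding w0_def d_def by (auto simp: field_simps)
    have "Nb 0 1 \<subseteq> {z. sq (z - w0)}"
    proof
      fix z :: 'a assume z: "z \<in> Nb 0 1"
      hence "x + d * z \<in> Nb x y" unfolding Nb_img[OF h(1)] d_def by blast
      hence "sq (x + d * z - w)" using h(4) by blast
      moreover have "x + d * z - w = d * (z - w0)" using d0 unfolding w0_def by (simp add: field_simps)
      ultimately show "z \<in> {z. sq (z - w0)}" using sq_scale h(1) d_def by auto
    qed
    thus False using T0 w00 w01 by blast
  qed
  have "sq (y - x) \<or> sq (x - y)" using sq_or_neg[OF q3, of "y - x"] xy by simp
  thus False using gen[of x y] gen[of y x] wx wy sub Nb_sym by metis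
qed

lemma K:
  assumes "(x::'a) \<noteq> y" "x' \<noteq> y'" "Nb x y = Nb x' y'"
  shows "{x, y} = {x', y'}"
proof -
  have "x' \<in> {x, y}"
  proof (rule ccontr)
    assume "x' \<notin> {x, y}"
    moreover have "Nb x y \<subseteq> {z. sq (z - x')}" using assms(3) unfolding Nb_def by auto
    ultimately show False using T assms(1) by blast
  qed
  moreover have "y' \<in> {x, y}"
  proof (rule ccontr)
    assume "y' \<notin> {x, y}"
    moreover have "Nb x y \<subseteq> {z. sq (z - y')}" using assms(3) unfolding Nb_def by auto
    ultimately show False using T assms(1) by blast
  qed
  ultimately show ?thesis using assms(2) by auto
qed

lemma Nb_ne: assumes "(x::'a) \<noteq> y" shows "Nb x y \<noteq> {}"
proof -
  have "2 * card (Nb 0 (1::'a)) + 1 = card {x::'a. sq x}" by (rule card_A[OF q3])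
  moreover have "2 * card {x::'a. sq x} + 1 = card (UNIV::'a set)" by (rule card_S[OF q3])
  ultimately have "card (Nb 0 (1::'a)) > 0" using q7 by linarith
  hence "card (Nb x y) > 0" using Nb_card[OF q3 assms] by simp
  thus ?thesis by auto
qed

end

lemma cn_black: "bp_common_nbrs (Inl x) (Inl y) = Inr ` Nb x y"
  unfolding bp_common_nbrs_def Nb_def
  apply (rule set_eqI)
  subgoal for v by (cases v) auto
  done

lemma cn_white: "bp_common_nbrs (Inr x) (Inr y) = Inl ` (uminus ` Nb (-x) (-y))"
  unfolding bp_common_nbrs_def Nb_def
  apply (rule set_eqI)
  subgoal for v by (cases v) (auto simp: image_iff add.commute intro: exI[of _ "- _"])
  done

theorem mainTheorem10:
  fixes u v u' v' :: "'a::{finite,field} + 'a"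
  assumes "card (UNIV :: 'a set) mod 4 = 3"
    and "card (UNIV :: 'a set) > 7"
    and "u \<noteq> v" and "bp_colour u = bp_colour v"
    and "u' \<noteq> v'" and "bp_colour u' = bp_colour v'"
    and "bp_common_nbrs u v = bp_common_nbrs u' v'"
  shows "{u, v} = {u', v'}"
proof -
  note q = assms(1,2)
  show ?thesis
  proof (cases u)
    case (Inl a)
    then obtain b where v: "v = Inl b" using assms(4) unfolding bp_colour_def by (cases v) auto
    have ab: "a \<noteq> b" using assms(3) Inl v by simp
    show ?thesis
    proof (cases u')
      case (Inl a')
      then obtain b' where v': "v' = Inl b'" using assms(6) unfolding bp_colour_def by (cases v') auto
      have ab': "a' \<noteq> b'" using assms(5) Inl v' by simp
      have "bp_common_nbrs u v = (Inr ` Nb a b :: ('a + 'a) set)" using \<open>u = Inl a\<close> v by (simp add: cn_black)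
      moreover have "bp_common_nbrs u' v' = (Inr ` Nb a' b' :: ('a + 'a) set)" using Inl v' by (simp add: cn_black)
      ultimately have "Inr ` Nb a b = (Inr ` Nb a' b' :: ('a + 'a) set)" using assms(7) by metis
      hence "Nb a b = Nb a' b'" by (simp add: inj_image_eq_iff)
      hence "{a, b} = {a', b'}" using K[OF q ab ab'] by simp
      thus ?thesis using \<open>u = Inl a\<close> v Inl v' by (auto simp: doubleton_eq_iff)
    next
      case (Inr a')
      then obtain b' where v': "v' = Inr b'" using assms(6) unfolding bp_colour_def by (cases v') auto
      have "bp_common_nbrs u v = (Inr ` Nb a b :: ('a + 'a) set)" using \<open>u = Inl a\<close> v by (simp add: cn_black)
      moreover have "bp_common_nbrs u' v' = (Inl ` (uminus ` Nb (-a') (-b')) :: ('a + 'a) set)" using Inr v' by (simp only: cn_white)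
      ultimately have "(Inr ` Nb a b :: ('a + 'a) set) = (Inl ` (uminus ` Nb (-a') (-b')) :: ('a + 'a) set)" using assms(7) by metis
      moreover have "Nb a b \<noteq> {}" using Nb_ne[OF q ab] .
      ultimately show ?thesis by blast
    qed
  next
    case (Inr a)
    then obtain b where v: "v = Inr b" using assms(4) unfolding bp_colour_def by (cases v) auto
    have ab: "-a \<noteq> -b" using assms(3) Inr v by simp
    show ?thesis
    proof (cases u')
      case (Inl a')
      then obtain b' where v': "v' = Inl b'" using assms(6) unfolding bp_colour_def by (cases v') auto
      have ab': "a' \<noteq> b'" using assms(5) Inl v' by simp
      have "bp_common_nbrs u v = (Inl ` (uminus ` Nb (-a) (-b)) :: ('a + 'a) set)" using \<open>u = Inr a\<close> v by (simp only: cn_white)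
      moreover have "bp_common_nbrs u' v' = (Inr ` Nb a' b' :: ('a + 'a) set)" using Inl v' by (simp add: cn_black)
      ultimately have "Inl ` (uminus ` Nb (-a) (-b)) = (Inr ` Nb a' b' :: ('a + 'a) set)" using assms(7) by metis
      moreover have "Nb a' b' \<noteq> {}" using Nb_ne[OF q ab'] .
      ultimately show ?thesis by blast
    next
      case (Inr a')
      then obtain b' where v': "v' = Inr b'" using assms(6) unfolding bp_colour_def by (cases v') auto
      have ab': "-a' \<noteq> -b'" using assms(5) Inr v' by simp
      have "bp_common_nbrs u v = (Inl ` (uminus ` Nb (-a) (-b)) :: ('a + 'a) set)" using \<open>u = Inr a\<close> v by (simp only: cn_white)
      moreover have "bp_common_nbrs u' v' = (Inl ` (uminus ` Nb (-a') (-b')) :: ('a + 'a) set)" using Inr v' by (simp only: cn_white)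
      ultimately have "(Inl ` (uminus ` Nb (-a) (-b)) :: ('a + 'a) set) = (Inl ` (uminus ` Nb (-a') (-b')) :: ('a + 'a) set)" using assms(7) by metis
      hence "Nb (-a) (-b) = Nb (-a') (-b')" by (simp add: inj_image_eq_iff)
      hence "{-a, -b} = {-a', -b'}" using K[OF q ab ab'] by simp
      thus ?thesis using \<open>u = Inr a\<close> v Inr v' by (auto simp: doubleton_eq_iff)
    qed
  qed
qed

end
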